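(* For every integer $n\ge 1$, the pentagonal stacked prism $Y_{5,n}$ is odd prime.
   Context: All graphs are finite and simple. A graph $G$ of order $N$ is odd prime if there is a bijection $\ell:V(G)\to\{1,3,\ldots,2N-1\}$ with $\gcd(\ell(u),\ell(v))=1$ for every edge $uv$. For $k\ge 3$, $n\ge 1$, the stacked prism $Y_{k,n}$ is the Cartesian product $C_k\,\square\,P_n$ of a $k$-cycle and a path on $n$ vertices: vertices $v_{i,j}$ ($1\le i\le n$, $1\le j\le k$), with edges $v_{i,j}v_{i,j+1}$ ($1\le j\le k-1$), $v_{i,k}v_{i,1}$ for each $i$, and $v_{i,j}v_{i+1,j}$ for $1\le i\le n-1$, $1\le j\le k$. *)

theory Defs
  imports Main
begin

definition odd_prime_graph :: "'a set \<Rightarrow> 'a set set \<Rightarrow> bool" where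
  "odd_prime_graph V E \<longleftrightarrow>
     (\<exists>l. bij_betw l V {k. \<exists>i\<in>{1..card V}. k = 2 * i - 1} \<and>
          (\<forall>u v. {u, v} \<in> E \<longrightarrow> coprime (l u :: nat) (l v)))"

text \<open>Stacked prism Y_{k,n} = C_k \<box> P_n: vertex v_{i,j} is the pair (i,j),
1 \<le> i \<le> n, 1 \<le> j \<le> k.\<close>

definition stacked_prism_vertices :: "nat \<Rightarrow> nat \<Rightarrow> (nat \<times> nat) set" where
  "stacked_prism_vertices k n = {1..n} \<times> {1..k}"

definition stacked_prism_edges :: "nat \<Rightarrow> nat \<Rightarrow> (nat \<times> nat) set set" where
  "stacked_prism_edges k n =
     {{(i, j), (i, j + 1)} | i j. 1 \<le> i \<and> i \<le> n \<and> 1 \<le> j \<and> j \<le> k - 1}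
   \<union> {{(i, k), (i, 1)} | i. 1 \<le> i \<and> i \<le> n}
   \<union> {{(i, j), (i + 1, j)} | i j. 1 \<le> i \<and> i \<le> n - 1 \<and> 1 \<le> j \<and> j \<le> k}"

end

theory Submission
  imports Defs
begin

definition tbl :: "nat list list" where
  "tbl = [[0,1,3,4,2],[3,4,2,0,1],[2,0,1,3,4],[1,3,4,2,0],[4,2,0,1,3]]"
definition itbl :: "nat list list" where
  "itbl = [[1,2,5,3,4],[4,5,3,1,2],[2,3,1,4,5],[5,1,4,2,3],[3,4,2,5,1]]"

definition off :: "nat \<Rightarrow> nat \<Rightarrow> nat" where "off r j = tbl ! r ! (j - 1)"

definition lab :: "nat \<times> nat \<Rightarrow> nat" where
  "lab p = 10 * (fst p - 1) + 2 * off ((fst p - 1) mod 5) (snd p) + 1"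

definition ginv :: "nat \<Rightarrow> nat \<times> nat" where
  "ginv k = (k div 10 + 1, itbl ! (k div 10 mod 5) ! ((k mod 10) div 2))"

lemma five_cases: "(r::nat) < 5 \<Longrightarrow> r = 0 \<or> r = 1 \<or> r = 2 \<or> r = 3 \<or> r = 4" by auto
lemma col_cases: "(j::nat) \<in> {1..5} \<Longrightarrow> j = 1 \<or> j = 2 \<or> j = 3 \<or> j = 4 \<or> j = 5" by auto

lemma factA: "r < 5 \<Longrightarrow> j \<in> {1..5} \<Longrightarrow> off r j < 5 \<and> itbl ! r ! (off r j) = j"
  using five_cases[of r] col_cases[of j] by (auto simp: off_def tbl_def itbl_def)

lemma factB: "r < 5 \<Longrightarrow> t < 5 \<Longrightarrow> itbl ! r ! t \<in> {1..5} \<and> off r (itbl ! r ! t) = t"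
  using five_cases[of r] five_cases[of t] by (auto simp: off_def tbl_def itbl_def)

lemma factC: "r < 5 \<Longrightarrow> j \<in> {1..4} \<Longrightarrow>
   off r (j+1) = off r j + 1 \<or> off r (j+1) = off r j + 2 \<or> off r j = off r (j+1) + 1 \<or> off r j = off r (j+1) + 2"
  using five_cases[of r] col_cases[of j] by (auto simp: off_def tbl_def)

lemma factC2: "r < 5 \<Longrightarrow>
   off r 1 = off r 5 + 1 \<or> off r 1 = off r 5 + 2 \<or> off r 5 = off r 1 + 1 \<or> off r 5 = off r 1 + 2"
  using five_cases[of r] by (auto simp: off_def tbl_def)

lemma factD: "r < 5 \<Longrightarrow> j \<in> {1..5} \<Longrightarrow>
   \<exists>d\<in>{2,4,8,16::nat}. 10 + 2 * off (Suc r mod 5) j = 2 * off r j + d"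
  using five_cases[of r] col_cases[of j] by (auto simp: off_def tbl_def)

lemma cop: assumes "odd (x::nat)" "y = x + d" "d \<in> {2,4,8,16}" shows "coprime x y"
proof -
  have "d = 2^1 \<or> d = 2^2 \<or> d = 2^3 \<or> d = 2^4" using assms(3) by auto
  then obtain k where d: "d = 2 ^ k" by blast
  have "coprime x 2" using assms(1) by (simp add: coprime_commute odd_iff_mod_2_eq_one)
  hence "coprime x d" by (simp add: d)
  thus ?thesis using assms(2) by (simp add: coprime_iff_gcd_eq_1)
qed


lemma hq: "(m::nat) \<in> {1..5*n} \<Longrightarrow> (2*m-1) div 10 + 1 \<le> n"
proof -
  assume "m \<in> {1..5*n}" hence "2*m-1 < 10*n" by auto
  thus ?thesis by (simp add: div_less_iff_less_mult)
qed

lemma hodd: "odd (b::nat) \<Longrightarrow> b = 10 * (b div 10) + 2 * ((b mod 10) div 2) + 1"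
proof -
  assume "odd b"
  hence "odd (b mod 10)" by (simp add: odd_iff_mod_2_eq_one mod_mod_cancel)
  hence "b mod 10 = 2 * ((b mod 10) div 2) + 1" by presburger
  moreover have "b = 10 * (b div 10) + b mod 10" by simp
  ultimately show ?thesis by linarith
qed

lemma lab_odd: "odd (lab p)" by (simp add: lab_def)

lemma card_V: "card (stacked_prism_vertices 5 n) = 5 * n"
  by (simp add: stacked_prism_vertices_def card_cartesian_product)

lemma edge_cases: "{u,v} \<in> stacked_prism_edges 5 n \<Longrightarrow> (\<exists>i j. {u,v} = {(i,j),(i,j+1)} \<and> 1 \<le> i \<and> i \<le> n \<and> 1 \<le> j \<and> j \<le> 4)
      \<or> (\<exists>i. {u,v} = {(i,5),(i,1)} \<and> 1 \<le> i \<and> i \<le> n)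
      \<or> (\<exists>i j. {u,v} = {(i,j),(i+1,j)} \<and> 1 \<le> i \<and> i \<le> n - 1 \<and> 1 \<le> j \<and> j \<le> 5)"
  unfolding stacked_prism_edges_def by auto

lemma edge_sym: "{x, y} = {u, v} \<Longrightarrow> coprime (lab x) (lab y) \<Longrightarrow> coprime (lab u) (lab (v::nat\<times>nat))"
  by (auto simp: doubleton_eq_iff coprime_commute)

lemma gen: "lab y = lab x + d \<or> lab x = lab y + d \<Longrightarrow> d \<in> {2,4,8,16} \<Longrightarrow> coprime (lab x) (lab y)"
proof -
  assume h: "lab y = lab x + d \<or> lab x = lab y + d" and d: "d \<in> {2,4,8,16}"
  show ?thesis
  proof (cases "lab y = lab x + d")
    case True thus ?thesis using cop[OF lab_odd _ d] by blast
  next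
    case False hence "lab x = lab y + d" using h by blast
    hence "coprime (lab y) (lab x)" using cop[OF lab_odd _ d] by blast
    thus ?thesis by (simp add: coprime_commute)
  qed
qed

lemma hor: "(i::nat) \<ge> 1 \<Longrightarrow> j \<in> {1..4} \<Longrightarrow> coprime (lab (i,j)) (lab (i, j+1))"
proof -
  assume "i \<ge> 1" "j \<in> {1..4}"
  hence "lab (i, j+1) = lab (i,j) + 2 \<or> lab (i,j+1) = lab (i,j) + 4 \<or> lab (i,j) = lab (i,j+1) + 2 \<or> lab (i,j) = lab (i,j+1) + 4"
    using factC[of "(i - 1) mod 5" j] by (auto simp: lab_def)
  thus ?thesis using gen[of "(i, j+1)" "(i,j)" 2] gen[of "(i, j+1)" "(i,j)" 4] by blast
qed

lemma hor2: "coprime (lab (i,5)) (lab (i, 1))"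
proof -
  have "lab (i, 1) = lab (i,5) + 2 \<or> lab (i,1) = lab (i,5) + 4 \<or> lab (i,5) = lab (i,1) + 2 \<or> lab (i,5) = lab (i,1) + 4"
    using factC2[of "(i - 1) mod 5"] by (auto simp: lab_def)
  thus ?thesis using gen[of "(i, 1)" "(i,5)" 2] gen[of "(i, 1)" "(i,5)" 4] by blast
qed

lemma ver0: "j \<in> {1..5} \<Longrightarrow> coprime (lab (Suc k,j)) (lab (Suc k+1, j))"
proof -
  assume j: "j \<in> {1..5}"
  have "\<exists>d\<in>{2,4,8,16::nat}. 10 + 2 * off (Suc (k mod 5) mod 5) j = 2 * off (k mod 5) j + d"
    using factD[of "k mod 5" j] j by simp
  then obtain d where d: "d \<in> {2,4,8,16::nat}" "10 + 2 * off (Suc (k mod 5) mod 5) j = 2 * off (k mod 5) j + d"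
    by blast
  have m: "Suc (k mod 5) mod 5 = Suc k mod 5" by (simp add: mod_Suc_eq)
  have l1: "lab (Suc k+1, j) = 10 * Suc k + 2 * off (Suc k mod 5) j + 1" by (simp add: lab_def)
  have l2: "lab (Suc k, j) = 10 * k + 2 * off (k mod 5) j + 1" by (simp add: lab_def)
  have "lab (Suc k+1, j) = lab (Suc k, j) + d" unfolding l1 l2 mult_Suc_right using d(2) unfolding m by linarith
  thus ?thesis using gen[of "(Suc k+1,j)" "(Suc k,j)" d] d(1) by blast
qed

lemma ver: "(i::nat) \<ge> 1 \<Longrightarrow> j \<in> {1..5} \<Longrightarrow> coprime (lab (i,j)) (lab (i+1, j))"
  using ver0[of j "i - 1"] by simp

lemma ar: "(w::nat) < 5 \<Longrightarrow> (10 * q + 2 * w + 1) div 10 = q \<and> ((10 * q + 2 * w + 1) mod 10) div 2 = w"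
proof -
  assume w: "w < 5"
  have h: "2*w+1 < 10" using w by simp
  have e: "10 * q + 2 * w + 1 = (2*w+1) + q * 10" by simp
  have d: "(10 * q + 2 * w + 1) div 10 = q" unfolding e using h by simp
  have m: "(10 * q + 2 * w + 1) mod 10 = 2*w+1" unfolding e using h by simp
  show ?thesis using d m by simp
qed

lemma ginv_lab: "(i::nat) \<ge> 1 \<Longrightarrow> j \<in> {1..5} \<Longrightarrow> ginv (lab (i,j)) = (i,j)"
proof -
  assume i: "i \<ge> 1" and j: "j \<in> {1..5}"
  define t where "t = off ((i - 1) mod 5) j"
  have r5: "(i - 1) mod 5 < 5" by simp
  have A: "t < 5" "itbl ! ((i - 1) mod 5) ! t = j" using factA[OF r5 j] unfolding t_def by auto
  have l: "lab (i, j) = 10 * (i - 1) + 2 * t + 1" by (simp add: lab_def t_def)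
  have d1: "(10 * (i - 1) + 2 * t + 1) div 10 = i - 1" using ar[OF A(1)] by blast
  have d2: "((10 * (i - 1) + 2 * t + 1) mod 10) div 2 = t" using ar[OF A(1)] by blast
  have "ginv (lab (i, j)) = (i - 1 + 1, itbl ! ((i - 1) mod 5) ! t)"
    by (simp only: ginv_def l d1 d2)
  also have "\<dots> = (i, j)" using A(2) i by simp
  finally show ?thesis .
qed

lemma bij_part1: "\<forall>a\<in>(stacked_prism_vertices 5 n). ginv (lab a) = a"
proof
  fix a assume a: "a \<in> (stacked_prism_vertices 5 n)"
  obtain i j where a_eq: "a = (i, j)" by (cases a)
  have i: "i \<ge> 1" and j: "j \<in> {1..5}" using a unfolding a_eq stacked_prism_vertices_def by auto
  show "ginv (lab a) = a" unfolding a_eq by (rule ginv_lab[OF i j])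
qed

lemma bij_part2: "\<forall>b\<in>{k. \<exists>i\<in>{1..5 * n}. k = 2 * i - 1}. lab (ginv b) = b"
proof
  fix b assume "b \<in> {k. \<exists>i\<in>{1..5 * n}. k = 2 * i - 1}"
  then obtain m where m: "m \<in> {1..5*n}" "b = 2 * m - 1" by blast
  define q where "q = b div 10"
  define t where "t = (b mod 10) div 2"
  have t5: "t < 5" unfolding t_def by simp
  have q5: "q mod 5 < 5" by simp
  have B: "off (q mod 5) (itbl ! (q mod 5) ! t) = t"
    using conjunct2[OF factB[OF q5 t5]] .
  have ob: "odd b" using m by auto
  have e: "lab (ginv b) = 10 * q + 2 * t + 1" unfolding ginv_def lab_def fst_conv snd_conv
    q_def[symmetric] t_def[symmetric] using B by simp
  show "lab (ginv b) = b" unfolding e q_def t_def by (rule sym[OF hodd[OF ob]])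
qed

lemma bij_part3: "lab ` (stacked_prism_vertices 5 n) \<subseteq> {k. \<exists>i\<in>{1..5 * n}. k = 2 * i - 1}"
proof
  fix k assume "k \<in> lab ` (stacked_prism_vertices 5 n)"
  then obtain i j where aij: "k = lab (i, j)" "i \<in> {1..n}" "j \<in> {1..5}"
    by (auto simp: stacked_prism_vertices_def)
  let ?r = "(i - 1) mod 5"
  have A: "off ?r j < 5" using factA[of ?r j] aij by auto
  have l: "k = 10 * (i - 1) + 2 * off ?r j + 1" by (simp add: lab_def aij)
  have "5 * (i - 1) + off ?r j + 1 \<in> {1..5*n}" using A aij(2) by auto
  moreover have "k = 2 * (5 * (i - 1) + off ?r j + 1) - 1" using l by simp
  ultimately show "k \<in> {k. \<exists>i\<in>{1..5 * n}. k = 2 * i - 1}" by blast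
qed

lemma bij_part4: "ginv ` {k. \<exists>i\<in>{1..5 * n}. k = 2 * i - 1} \<subseteq> (stacked_prism_vertices 5 n)"
proof
  fix p assume "p \<in> ginv ` {k. \<exists>i\<in>{1..5 * n}. k = 2 * i - 1}"
  then obtain m where m: "m \<in> {1..5*n}" "p = ginv (2 * m - 1)" by auto
  define bb where "bb = 2 * m - 1"
  define q where "q = bb div 10"
  define t where "t = (bb mod 10) div 2"
  have t5: "t < 5" unfolding t_def by simp
  have B: "itbl ! (q mod 5) ! t \<in> {1..5}"
    using factB[of "q mod 5" t] t5 by auto
  have qn: "q + 1 \<le> n" using hq[OF m(1)] unfolding q_def bb_def .
  have "p = (q + 1, itbl ! (q mod 5) ! t)" using m(2) unfolding ginv_def q_def t_def bb_def by simp
  thus "p \<in> (stacked_prism_vertices 5 n)" using B qn by (simp add: stacked_prism_vertices_def)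
qed

lemma bij_lab: "bij_betw lab (stacked_prism_vertices 5 n) {k. \<exists>i\<in>{1..5 * n}. k = 2 * i - 1}"
  by (rule bij_betw_byWitness[where f' = ginv, OF bij_part1 bij_part2 bij_part3 bij_part4])

lemma edge_cop: assumes e: "{u, v} \<in> stacked_prism_edges 5 n" shows "coprime (lab u) (lab v)"
  using edge_cases[OF e]
  proof (elim disjE exE conjE)
    fix i j assume h: "{u,v} = {(i,j),(i,j+1)}" "1 \<le> i" "j \<ge> 1" "j \<le> 4"
    have "coprime (lab (i,j)) (lab (i,j+1))" using hor[of i j] h(2-4) by simp
    thus ?thesis using edge_sym[OF h(1)[symmetric]] by blast
  next
    fix i assume h: "{u,v} = {(i,5),(i,1)}"
    thus ?thesis using hor2[of i] edge_sym[OF h[symmetric]] by blast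
  next
    fix i j assume h: "{u,v} = {(i,j),(i+1,j)}" "1 \<le> i" "j \<ge> 1" "j \<le> 5"
    have "coprime (lab (i,j)) (lab (i+1,j))" using ver[of i j] h(2-4) by simp
    thus ?thesis using edge_sym[OF h(1)[symmetric]] by blast
  qed

theorem theorem3p7:
  fixes n :: nat
  assumes "n \<ge> 1"
  shows "odd_prime_graph (stacked_prism_vertices 5 n) (stacked_prism_edges 5 n)"
  unfolding odd_prime_graph_def card_V
proof (rule exI[of _ lab], intro conjI allI impI)
  show "bij_betw lab (stacked_prism_vertices 5 n) {k. \<exists>i\<in>{1..5 * n}. k = 2 * i - 1}"
    by (rule bij_lab)
next
  fix u v assume "{u, v} \<in> stacked_prism_edges 5 n"
  thus "coprime (lab u) (lab v)" by (rule edge_cop)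
qed

end
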